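(* Let $a\geq 3$ and $m\geq 2a^2-a+2$ be integers, and suppose $[C(m,a)]$ is colored with red and blue so that there is no monochromatic solution of $L(m,a)$ in $[C(m,a)]$, with both $a-2$ and $a-1$ red. Then $2$ is red.
   Context: For integers $m\geq 3$, $a\geq 1$, $L(m,a)$ denotes the equation $x_1+x_2+\cdots+x_{m-1}=a x_m$. For a positive integer $n$, $[n]=\{1,\dots,n\}$. A solution of $L(m,a)$ in $[n]$ is an $m$-tuple $(x_1,\dots,x_m)\in[n]^m$ (entries not necessarily distinct) satisfying the equation; given a 2-coloring of $[n]$, it is monochromatic if all $x_i$ have the same color. $C(m,a)$ denotes $\left\lceil \frac{m-1}{a}\left\lceil \frac{m-1}{a}\right\rceil\right\rceil$. *)

theory Defs
  imports Complex_Main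
begin

definition Cma :: "nat \<Rightarrow> nat \<Rightarrow> nat" where
  "Cma m a = nat (ceiling ((of_nat (m - 1) / of_nat a :: real) * of_int (ceiling (of_nat (m - 1) / of_nat a :: real))))"

text \<open>A solution of L(m,a) in [n]: an m-tuple x_1..x_m, indexed here as x 0 .. x (m-1),
  with all entries in {1..n} and x_1+...+x_{m-1} = a x_m.\<close>
definition is_solution :: "nat \<Rightarrow> nat \<Rightarrow> nat \<Rightarrow> (nat \<Rightarrow> nat) \<Rightarrow> bool" where
  "is_solution m a n x \<longleftrightarrow>
     (\<forall>i<m. x i \<in> {1..n}) \<and> (\<Sum>i<m - 1. x i) = a * x (m - 1)"

text \<open>A 2-colouring is a map col :: nat => bool (True = red, False = blue), relevant on [n].
  A solution is monochromatic if all entries have the same colour.\<close>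
definition monochromatic :: "(nat \<Rightarrow> bool) \<Rightarrow> nat \<Rightarrow> (nat \<Rightarrow> nat) \<Rightarrow> bool" where
  "monochromatic col m x \<longleftrightarrow> (\<forall>i<m. \<forall>j<m. col (x i) = col (x j))"

end

theory Submission
  imports Defs
begin

lemma sum_step3:
  fixes A B C :: nat
  assumes "k1 \<le> k2" "k2 \<le> N"
  shows "(\<Sum>i<N. if i<k1 then A else if i<k2 then B else C) = k1*A + (k2-k1)*B + (N-k2)*C"
proof -
  let ?f = "\<lambda>i. if i<k1 then A else if i<k2 then B else C"
  have e: "{..<N} = {0..<N}" by auto
  have s1: "sum ?f {0..<k1} + sum ?f {k1..<k2} = sum ?f {0..<k2}"
    using assms by (intro sum.atLeastLessThan_concat) auto
  have s2: "sum ?f {0..<k2} + sum ?f {k2..<N} = sum ?f {0..<N}"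
    using assms by (intro sum.atLeastLessThan_concat) auto
  have a1: "sum ?f {0..<k1} = k1*A" by (simp add: sum.cong[of _ _ ?f "\<lambda>_. A"])
  have a2: "sum ?f {k1..<k2} = (k2-k1)*B" by (simp add: sum.cong[of _ _ ?f "\<lambda>_. B"])
  have a3: "sum ?f {k2..<N} = (N-k2)*C" using assms by (simp add: sum.cong[of _ _ ?f "\<lambda>_. C"])
  show ?thesis unfolding e using s1 s2 a1 a2 a3 by simp
qed

lemma sum_lastcong:
  fixes f :: "nat \<Rightarrow> nat"
  shows "(\<Sum>i<m - 1. (if i = m - 1 then y else f i)) = (\<Sum>i<m - 1. f i)"
  by (rule sum.cong) auto

theorem lemma6:
  fixes m a :: nat and red :: "nat \<Rightarrow> bool"
  assumes "a \<ge> 3"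
    and "m \<ge> 2 * a^2 - a + 2"
    and "\<not> (\<exists>x. is_solution m a (Cma m a) x \<and> monochromatic red m x)"
    and "red (a - 2)" and "red (a - 1)"
  shows "red 2"
proof (cases "a = 3")
  case True then show ?thesis using assms(5) by simp
next
  case False
  hence a4: "a \<ge> 4" using assms(1) by simp
  define N where "N = m - 1"
  define q where "q = N div a"
  define r where "r = N mod a"
  have Nqr: "N = a*q + r" unfolding q_def r_def by simp
  have ra: "r < a" unfolding r_def using a4 by simp
  have "a*a \<le> a^2" by (simp add: power2_eq_square)
  have "N \<ge> 2*a^2 - a + 1" using assms(2) unfolding N_def by simp
  hence "N \<ge> a*(2*a-1)" by (simp add: power2_eq_square algebra_simps)
  hence qge: "q \<ge> 2*a - 1" unfolding q_def using a4
    by (metis div_le_mono nonzero_mult_div_cancel_left not_numeral_le_zero le_zero_eq mult_is_0)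
  have mN: "m = N + 1" unfolding N_def using assms(2) by simp
  define n where "n = Cma m a"
  define hi where "hi = q*(a-1) + r - 1"
  define lo where "lo = q*(a-2) + r"
  have aq: "a \<le> q" using qge a4 by linarith
  have hiq: "hi < q*q"
  proof -
    have "a \<le> q" using qge a4 by linarith
    hence "q*q \<ge> q*a" by simp
    moreover have "q*a = q*(a-1) + q" using a4 by (cases a) auto
    ultimately show ?thesis unfolding hi_def using ra qge by linarith
  qed
  have nbound: "q*q \<le> n"
  proof -
    define x where "x = (of_nat N / of_nat a :: real)"
    have "q*a \<le> N" using Nqr by simp
    hence "real q * real a \<le> real N" by (metis of_nat_le_iff of_nat_mult)
    hence xq: "real q \<le> x" unfolding x_def using a4
      by (simp add: field_simps)
    have "x \<le> of_int (ceiling x)" by simp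
    hence "real q \<le> of_int (ceiling x)" using xq by linarith
    have "real q * real q \<le> x * of_int (ceiling x)"
      using xq \<open>real q \<le> of_int (ceiling x)\<close> by (intro mult_mono) auto
    also have "\<dots> \<le> of_int (ceiling (x * of_int (ceiling x)))" by simp
    finally have "real_of_int (int (q*q)) \<le> real_of_int (ceiling (x * of_int (ceiling x)))" by simp
    hence "int (q*q) \<le> ceiling (x * of_int (ceiling x))" by linarith
    hence "nat (int (q*q)) \<le> nat (ceiling (x * of_int (ceiling x)))" by (rule nat_mono)
    moreover have "n = nat (ceiling (x * of_int (ceiling x)))" unfolding n_def Cma_def x_def N_def by simp
    ultimately show ?thesis by (metis nat_int)
  qed
  have blue_of: "\<not> red y" if yr: "1 \<le> y" "y \<le> n" "N*(a-2) \<le> a*y" "a*y \<le> N*(a-1)" for y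
  proof
    assume ry: "red y"
    define k where "k = a*y - N*(a-2)"
    have e1: "N*(a-2) + N = N*(a-1)"
    proof -
      have "a - 1 = (a-2) + 1" using a4 by simp
      thus ?thesis by (simp add: algebra_simps)
    qed
    have kN: "k \<le> N" unfolding k_def using yr e1 by linarith
    define x where "x = (\<lambda>i. if i = m - 1 then y else (if i<k then a-1 else if i < N then a-2 else 0))"
    have "(\<Sum>i<m - 1. x i) = (\<Sum>i<N. if i<k then a-1 else if i < N then a-2 else 0)"
      unfolding x_def N_def[symmetric] by (rule sum.cong) auto
    also have "\<dots> = k*(a-1) + (N-k)*(a-2) + (N-N)*0"
      using kN by (intro sum_step3) auto
    also have "\<dots> = a*y"
    proof -
      have "k*(a-1) = k*(a-2) + k"
      proof -
        have "a - 1 = (a-2) + 1" using a4 by simp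
        thus ?thesis by (simp add: algebra_simps)
      qed
      moreover have "(N-k)*(a-2) + k*(a-2) = N*(a-2)"
        by (metis add_mult_distrib kN le_add_diff_inverse2)
      moreover have "k + N*(a-2) = a*y" unfolding k_def using yr by simp
      ultimately show ?thesis by simp
    qed
    finally have sumeq: "(\<Sum>i<m - 1. x i) = a * x (m - 1)" unfolding x_def by simp
    have "a - 1 \<le> n" using aq nbound by (meson le_trans le_diff_conv le_square trans_le_add1)
    moreover have "1 \<le> a - 1" "1 \<le> a - 2" "a - 2 \<le> a - 1" using a4 by auto
    ultimately have "\<forall>i<m. x i \<in> {1..n}" unfolding x_def using yr mN by auto
    hence sol: "is_solution m a n x" unfolding is_solution_def using sumeq by auto
    have "monochromatic red m x" unfolding monochromatic_def x_def N_def
      using ry assms(4,5) by auto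
    thus False using sol assms(3) unfolding n_def by blast
  qed
  show ?thesis
  proof (rule ccontr)
    assume b2: "\<not> red 2"
    obtain b where ab: "a = b + 4" using a4 by (metis add.commute le_Suc_ex)
    have a1: "a - 1 = b + 3" and a2: "a - 2 = b + 2" and a4': "a - 4 = b" using ab by auto
    define y2 where "y2 = q*(b+2) + r + b"
    have qb1: "q \<ge> 2*b+7" using qge ab by simp
    obtain c where qc: "q = 2*b+7+c" using qb1 by (metis add.commute le_Suc_ex)
    have qb2: "q*b \<ge> (2*b+7)*b" using qb1 by (rule mult_right_mono) simp
    have qb3: "q*b \<ge> b" proof -
      have "(2*b+7)*b \<ge> b" by simp
      thus ?thesis using qb2 by linarith
    qed
    have hi1: "hi + 1 = q*(b+3) + r" unfolding hi_def a1 using qb1 by (cases q) auto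
    have NN: "N = q*b + 4*q + r" using Nqr ab by (simp add: algebra_simps)
    have hige: "y2 \<le> hi" using hi1 qb1 unfolding y2_def by (simp add: algebra_simps)
    have "1 \<le> hi" using hi1 qb1 by (simp add: algebra_simps)
    have "hi \<le> n" using hiq nbound by linarith
    have "1 \<le> y2" "y2 \<le> n" using hige \<open>hi \<le> n\<close> qb1 unfolding y2_def by auto
    have bhi: "\<not> red hi"
    proof (rule blue_of)
      show "1 \<le> hi" "hi \<le> n" by fact+
      have e: "a*hi + a = a*(q*(b+3)+r)" using hi1 by (metis add_mult_distrib2 mult_1_right)
      show "N*(a-2) \<le> a*hi" using e unfolding a2 NN ab qc by (simp add: algebra_simps; linarith?)
      show "a*hi \<le> N*(a-1)" using e ra unfolding a1 NN ab qc by (simp add: algebra_simps; linarith?)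
    qed
    have by2: "\<not> red y2"
    proof (rule blue_of)
      show "1 \<le> y2" "y2 \<le> n" by fact+
      show "N*(a-2) \<le> a*y2" unfolding a2 NN ab y2_def by (simp add: algebra_simps)
      show "a*y2 \<le> N*(a-1)" using ra unfolding a1 NN ab y2_def qc by (simp add: algebra_simps; linarith?)
    qed
    define x where "x = (\<lambda>i. if i = m - 1 then hi else (if i<a-4 then hi else if i < a-2 then y2 else 2))"
    have "(\<Sum>i<m - 1. x i) = (\<Sum>i<N. if i<a-4 then hi else if i < a-2 then y2 else 2)"
      unfolding x_def N_def[symmetric] by (rule sum.cong) auto
    also have "\<dots> = (a-4)*hi + (a-2-(a-4))*y2 + (N-(a-2))*2"
      using NN qb1 unfolding a2 a4' by (intro sum_step3) auto
    also have "\<dots> = a*hi"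
    proof -
      have "y2 + N - (b+2) = 2*hi" using hi1 NN unfolding y2_def by (simp add: algebra_simps)
      moreover have "N \<ge> b + 2" using NN qb1 by simp
      ultimately show ?thesis unfolding a2 a4' ab by (simp add: algebra_simps)
    qed
    finally have sumeq: "(\<Sum>i<m - 1. x i) = a * x (m - 1)" unfolding x_def by simp
    have "2 \<le> n" using \<open>y2 \<le> n\<close> qb1 unfolding y2_def by simp
    hence "\<forall>i<m. x i \<in> {1..n}" unfolding x_def
      using mN \<open>1 \<le> y2\<close> \<open>y2 \<le> n\<close> \<open>1 \<le> hi\<close> \<open>hi \<le> n\<close> by auto
    hence sol: "is_solution m a n x" unfolding is_solution_def using sumeq by auto
    have "monochromatic red m x" unfolding monochromatic_def x_def
      using b2 bhi by2 by auto
    thus False using sol assms(3) unfolding n_def by blast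
  qed
qed

end
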